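(* Let $\mathcal{P}=\langle P,\le\rangle$ be a finite bounded poset with $|P|\ge 2$ and height $H$, and let $R^+(\mathcal{P})$ be its interval rank poset. Then $H(R^+(\mathcal{P}))\ge H(\mathcal{P})$.
   Context: A poset is bounded if it has a least and a greatest element. The height $H(\mathcal{Q})$ of a finite poset is the number of elements in its largest chain; $H=H(\mathcal{P})$. For $a\in P$, $\uparrow a=\{b:b\ge a\}$ and $\downarrow a=\{b:b\le a\}$ as subposets. The standard interval rank is $R^+(a)=[H(\uparrow a)-1,\;H-H(\downarrow a)]$. The interval rank poset $R^+(\mathcal{P})$ is the set $\{R^+(a):a\in P\}$ of intervals ordered by $\ge_W$, where $[x_*,x^*]\le_W[y_*,y^*]$ iff $x_*\le y_*$ and $x^*\le y^*$. *)

theory Defs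
  imports Main
begin

definition is_chain :: "'a set \<Rightarrow> ('a \<Rightarrow> 'a \<Rightarrow> bool) \<Rightarrow> 'a set \<Rightarrow> bool" where
  "is_chain S le C \<longleftrightarrow> C \<subseteq> S \<and> (\<forall>x\<in>C. \<forall>y\<in>C. le x y \<or> le y x)"

definition height :: "'a set \<Rightarrow> ('a \<Rightarrow> 'a \<Rightarrow> bool) \<Rightarrow> nat" where
  "height S le = Max (card ` {C. is_chain S le C})"

definition up_set :: "'a set \<Rightarrow> ('a \<Rightarrow> 'a \<Rightarrow> bool) \<Rightarrow> 'a \<Rightarrow> 'a set" where
  "up_set S le a = {b \<in> S. le a b}"

definition down_set :: "'a set \<Rightarrow> ('a \<Rightarrow> 'a \<Rightarrow> bool) \<Rightarrow> 'a \<Rightarrow> 'a set" where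
  "down_set S le a = {b \<in> S. le b a}"

definition partial_order_on_set :: "'a set \<Rightarrow> ('a \<Rightarrow> 'a \<Rightarrow> bool) \<Rightarrow> bool" where
  "partial_order_on_set S le \<longleftrightarrow>
     (\<forall>x\<in>S. le x x) \<and>
     (\<forall>x\<in>S. \<forall>y\<in>S. le x y \<and> le y x \<longrightarrow> x = y) \<and>
     (\<forall>x\<in>S. \<forall>y\<in>S. \<forall>z\<in>S. le x y \<and> le y z \<longrightarrow> le x z)"

definition bounded_poset :: "'a set \<Rightarrow> ('a \<Rightarrow> 'a \<Rightarrow> bool) \<Rightarrow> bool" where
  "bounded_poset S le \<longleftrightarrow>
     (\<exists>b\<in>S. \<forall>x\<in>S. le b x) \<and> (\<exists>t\<in>S. \<forall>x\<in>S. le x t)"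

definition interval_rank :: "'a set \<Rightarrow> ('a \<Rightarrow> 'a \<Rightarrow> bool) \<Rightarrow> 'a \<Rightarrow> nat \<times> nat" where
  "interval_rank S le a =
     (height (up_set S le a) le - 1, height S le - height (down_set S le a) le)"

definition le_W :: "nat \<times> nat \<Rightarrow> nat \<times> nat \<Rightarrow> bool" where
  "le_W x y \<longleftrightarrow> fst x \<le> fst y \<and> snd x \<le> snd y"

definition rank_poset_carrier :: "'a set \<Rightarrow> ('a \<Rightarrow> 'a \<Rightarrow> bool) \<Rightarrow> (nat \<times> nat) set" where
  "rank_poset_carrier S le = interval_rank S le ` S"

definition ge_W :: "nat \<times> nat \<Rightarrow> nat \<times> nat \<Rightarrow> bool" where
  "ge_W x y \<longleftrightarrow> le_W y x"

end

theory Submission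
  imports Defs
begin

lemma po_trans: "partial_order_on_set P le \<Longrightarrow> x \<in> P \<Longrightarrow> y \<in> P \<Longrightarrow> z \<in> P \<Longrightarrow> le x y \<Longrightarrow> le y z \<Longrightarrow> le x z"
  unfolding partial_order_on_set_def by blast
lemma po_anti: "partial_order_on_set P le \<Longrightarrow> x \<in> P \<Longrightarrow> y \<in> P \<Longrightarrow> le x y \<Longrightarrow> le y x \<Longrightarrow> x = y"
  unfolding partial_order_on_set_def by blast
lemma po_refl: "partial_order_on_set P le \<Longrightarrow> x \<in> P \<Longrightarrow> le x x"
  unfolding partial_order_on_set_def by blast

lemma chains_fin: "finite S \<Longrightarrow> finite (card ` {C. is_chain S le C})"
  by (rule finite_imageI, rule finite_subset[of _ "Pow S"]) (auto simp: is_chain_def)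

lemma height_ge: "finite S \<Longrightarrow> is_chain S le C \<Longrightarrow> card C \<le> height S le"
  unfolding height_def by (rule Max_ge[OF chains_fin]) auto

lemma height_att: assumes "finite S" shows "\<exists>C. is_chain S le C \<and> card C = height S le"
proof -
  have "height S le \<in> card ` {C. is_chain S le C}"
    unfolding height_def
    by (rule Max_in[OF chains_fin[OF assms]]) (auto simp: is_chain_def)
  then show ?thesis by auto
qed

lemma up_strict:
  assumes fin: "finite P" and po: "partial_order_on_set P le"
    and ab: "a \<in> P" "b \<in> P" "le a b" "a \<noteq> b"
  shows "height (up_set P le b) le < height (up_set P le a) le"
proof -
  have f: "finite (up_set P le b)" "finite (up_set P le a)" using fin by (auto simp: up_set_def)
  obtain C where C: "is_chain (up_set P le b) le C" "card C = height (up_set P le b) le"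
    using height_att[OF f(1)] by blast
  have fC: "finite C" using C(1) f(1) by (meson finite_subset is_chain_def)
  have sub: "\<And>c. c \<in> C \<Longrightarrow> c \<in> P \<and> le b c" using C(1) by (auto simp: is_chain_def up_set_def)
  have ac: "\<And>c. c \<in> C \<Longrightarrow> le a c" proof -
    fix c assume "c \<in> C" then show "le a c" using sub[of c] po_trans[OF po, of a b c] ab by blast
  qed
  have anC: "a \<notin> C"
  proof
    assume "a \<in> C"
    then have "le b a" using sub by blast
    then show False using po_anti[OF po ab(1,2)] ab by blast
  qed
  have "is_chain (up_set P le a) le (insert a C)"
    using C(1) sub ac ab po_refl[OF po] unfolding is_chain_def up_set_def by auto
  then have "card (insert a C) \<le> height (up_set P le a) le" using height_ge[OF f(2)] by blast
  then show ?thesis using C(2) fC anC by simp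
qed

lemma up_pos:
  assumes fin: "finite P" and po: "partial_order_on_set P le" and b: "b \<in> P"
  shows "1 \<le> height (up_set P le b) le"
proof -
  have "is_chain (up_set P le b) le {b}" using po_refl[OF po b] b
    unfolding is_chain_def up_set_def by auto
  then show ?thesis using height_ge[of "up_set P le b" le "{b}"] fin by (auto simp: up_set_def)
qed

lemma down_mono:
  assumes fin: "finite P" and po: "partial_order_on_set P le"
    and ab: "a \<in> P" "b \<in> P" "le a b"
  shows "height (down_set P le a) le \<le> height (down_set P le b) le"
proof -
  have f: "finite (down_set P le a)" "finite (down_set P le b)" using fin by (auto simp: down_set_def)
  obtain C where C: "is_chain (down_set P le a) le C" "card C = height (down_set P le a) le"
    using height_att[OF f(1)] by blast
  have "is_chain (down_set P le b) le C"
    using C(1) ab po_trans[OF po] unfolding is_chain_def down_set_def by blast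
  then show ?thesis using C(2) height_ge[OF f(2)] by force
qed

lemma ge_step:
  assumes fin: "finite P" and po: "partial_order_on_set P le"
    and ab: "a \<in> P" "b \<in> P" "le a b"
  shows "ge_W (interval_rank P le a) (interval_rank P le b)"
proof (cases "a = b")
  case True then show ?thesis by (simp add: ge_W_def le_W_def)
next
  case False
  have "height (up_set P le b) le < height (up_set P le a) le" using up_strict[OF assms False] .
  moreover have "height (down_set P le a) le \<le> height (down_set P le b) le" using down_mono[OF assms] .
  ultimately show ?thesis by (auto simp: ge_W_def le_W_def interval_rank_def)
qed

lemma fst_strict:
  assumes fin: "finite P" and po: "partial_order_on_set P le"
    and ab: "a \<in> P" "b \<in> P" "le a b" "a \<noteq> b"
  shows "fst (interval_rank P le a) \<noteq> fst (interval_rank P le b)"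
  using up_strict[OF assms] up_pos[OF fin po ab(2)] by (simp add: interval_rank_def)

theorem proposition5:
  fixes P :: "'a set" and le :: "'a \<Rightarrow> 'a \<Rightarrow> bool"
  assumes "finite P"
    and "partial_order_on_set P le"
    and "bounded_poset P le"
    and "card P \<ge> 2"
  shows "height (rank_poset_carrier P le) ge_W \<ge> height P le"
proof -
  let ?f = "interval_rank P le"
  obtain C where C: "is_chain P le C" "card C = height P le"
    using height_att[OF assms(1)] by blast
  have CP: "C \<subseteq> P" using C(1) by (simp add: is_chain_def)
  have inj: "inj_on ?f C"
  proof (rule inj_onI)
    fix x y assume xy: "x \<in> C" "y \<in> C" "?f x = ?f y"
    show "x = y"
    proof (rule ccontr)
      assume ne: "x \<noteq> y"
      have "le x y \<or> le y x" using C(1) xy by (auto simp: is_chain_def)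
      then show False
      proof
        assume "le x y" then show False using fst_strict[OF assms(1,2), of x y] xy ne CP by auto
      next
        assume "le y x" then show False using fst_strict[OF assms(1,2), of y x] xy ne CP by auto
      qed
    qed
  qed
  have ch: "is_chain (rank_poset_carrier P le) ge_W (?f ` C)"
    unfolding is_chain_def rank_poset_carrier_def
  proof (intro conjI ballI)
    show "?f ` C \<subseteq> ?f ` P" using CP by blast
  next
    fix u v assume "u \<in> ?f ` C" "v \<in> ?f ` C"
    then obtain x y where xy: "x \<in> C" "y \<in> C" "u = ?f x" "v = ?f y" by blast
    have "le x y \<or> le y x" using C(1) xy by (auto simp: is_chain_def)
    then show "ge_W u v \<or> ge_W v u" using ge_step[OF assms(1,2), of x y] ge_step[OF assms(1,2), of y x] xy CP by auto
  qed
  have "card (?f ` C) \<le> height (rank_poset_carrier P le) ge_W"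
    using height_ge[OF _ ch] assms(1) by (simp add: rank_poset_carrier_def)
  then show ?thesis using card_image[OF inj] C(2) by simp
qed

end
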